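(* Let $q$ be odd with $q\equiv1\pmod4$ fixed, and put $h=\left[\frac{2g-1}{2}\right]$ $(=g-1)$. Then, as $g\to\infty$, $$\sum_{\substack{P\text{ monic irreducible}\\ \deg P=2g+1}}\ \sum_{\substack{f\text{ monic},\ \deg f\le 2g-1\\ f=\square}}\frac{\chi_P(f)\,d(f)}{|f|^{1/2}}=\frac{1}{12}\,\frac{1}{\zeta_A(2)}\,\frac{|P|}{\log_q|P|}\,h(1+h)(1+2h)+O\!\left(\frac{|P|}{\log_q|P|}\,g^2\right),$$ where $|P|=q^{2g+1}$, $\log_q|P|=2g+1$, $\zeta_A(2)=\frac{1}{1-q^{-1}}$, and $[x]$ is the integer part of $x$.
   Context: $A=\mathbb{F}_q[T]$; for nonzero $f\in A$, $|f|=q^{\deg f}$. "$f=\square$" means $f$ is the square of a monic polynomial. $d(f)$ is the number of pairs $(h_1,h_2)$ of monic polynomials with $h_1h_2=f$. For a monic irreducible $Q$ and $a\in A$, $\left(\frac{a}{Q}\right)$ is $0$ if $Q\mid a$, $1$ if $a$ is a nonzero square mod $Q$, $-1$ otherwise; extended to monic $f=\prod Q_i^{e_i}$ by $\left(\frac{a}{f}\right)=\prod\left(\frac{a}{Q_i}\right)^{e_i}$, $\left(\frac{a}{1}\right)=1$. For monic irreducible $P$, $\chi_P(f)=\left(\frac{P}{f}\right)$. Implied constants may depend on $q$. *)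

theory Defs
  imports "HOL-Computational_Algebra.Computational_Algebra" "HOL-Library.Landau_Symbols" "HOL-Library.Cardinality"
begin

definition monic :: "'a::field_gcd poly \<Rightarrow> bool" where
  "monic f \<longleftrightarrow> f \<noteq> 0 \<and> lead_coeff f = 1"

definition poly_legendre :: "'a::field_gcd poly \<Rightarrow> 'a poly \<Rightarrow> int" where
  "poly_legendre a Q =
     (if Q dvd a then 0
      else if (\<exists>b. b\<^sup>2 mod Q = a mod Q) then 1 else -1)"

definition poly_jacobi :: "'a::field_gcd poly \<Rightarrow> 'a poly \<Rightarrow> int" where
  "poly_jacobi a f = (\<Prod>Q\<in>prime_factors f. poly_legendre a Q ^ multiplicity Q f)"

definition chi :: "'a::field_gcd poly \<Rightarrow> 'a poly \<Rightarrow> int" where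
  "chi P f = poly_jacobi P f"

definition divisor_count :: "'a::field_gcd poly \<Rightarrow> nat" where
  "divisor_count f = card {(h1, h2). monic h1 \<and> monic h2 \<and> h1 * h2 = f}"

definition pnorm :: "'a::{finite,field_gcd} poly \<Rightarrow> real" where
  "pnorm f = real (CARD('a)) ^ degree f"

definition is_monic_square :: "'a::field_gcd poly \<Rightarrow> bool" where
  "is_monic_square f \<longleftrightarrow> (\<exists>h. monic h \<and> f = h\<^sup>2)"

end

theory Submission
  imports Defs "HOL-Real_Asymp.Real_Asymp"
begin


lemma normalize_monic: fixes f :: "'a::field_gcd poly" shows "f \<noteq> 0 \<Longrightarrow> normalize f = f \<Longrightarrow> monic f"
  unfolding monic_def 
proof -
  assume a: "f \<noteq> 0" "normalize f = f"
  have "lead_coeff f = lead_coeff f div unit_factor (lead_coeff f)"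
    using coeff_normalize[of f "degree f"] a(2) by simp
  also have "\<dots> = 1" using a(1) by (simp add: dvd_field_iff normalize_1_iff)
  finally show "f \<noteq> 0 \<and> lead_coeff f = 1" using a by simp
qed

lemma monic_normalize: fixes f :: "'a::field_gcd poly" shows "monic f \<Longrightarrow> normalize f = f"
  unfolding monic_def by (simp add: normalize_poly_eq_map_poly)

lemma monic_nz: "monic f \<Longrightarrow> f \<noteq> 0" by (simp add: monic_def)

lemma monic_one[simp]: "monic (1::'a::field_gcd poly)" by (simp add: monic_def)

lemma monic_mult: fixes f g :: "'a::field_gcd poly"
  shows "monic f \<Longrightarrow> monic g \<Longrightarrow> monic (f * g)"
  by (simp add: monic_def lead_coeff_mult)

lemma monic_power: fixes f :: "'a::field_gcd poly"
  shows "monic f \<Longrightarrow> monic (f ^ k)"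
  by (induction k) (auto intro: monic_mult)

lemma monic_degree_mult: fixes f g :: "'a::field_gcd poly"
  shows "monic f \<Longrightarrow> monic g \<Longrightarrow> degree (f * g) = degree f + degree g"
  by (simp add: monic_def degree_mult_eq)

lemma monic_factor: fixes f g :: "'a::field_gcd poly"
  assumes "monic f" "monic (f * g)" shows "monic g"
  using assms by (auto simp: monic_def lead_coeff_mult)

lemma monic_gcd: fixes a b :: "'a::field_gcd poly"
  shows "a \<noteq> 0 \<Longrightarrow> monic (gcd a b)"
  by (intro normalize_monic) auto

lemma monic_sq_unique: fixes s t :: "'a::field_gcd poly"
  assumes "monic s" "monic t" "s^2 = t^2" shows "s = t"
proof -
  from assms(3) have "s = t \<or> s = - t" by (simp add: power2_eq_iff)
  then show ?thesis
  proof
    assume st: "s = - t"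
    then have "lead_coeff s = - lead_coeff t" by simp
    then have m: "(1::'a) = -1" using assms by (simp add: monic_def)
    have "- t = t"
    proof -
      have "- t = smult (-1) t" by simp
      also have "\<dots> = smult 1 t" by (simp only: m[symmetric])
      also have "\<dots> = t" by simp
      finally show ?thesis .
    qed
    with st show ?thesis by simp
  qed
qed

definition Monics :: "nat \<Rightarrow> 'a::field_gcd poly set" where
  "Monics m = {f. monic f \<and> degree f = m}"

lemma Monics_eq: "Monics m = (\<lambda>xs. Poly (xs @ [1])) ` {xs::'a::{finite,field_gcd} list. set xs \<subseteq> UNIV \<and> length xs = m}"
proof (rule set_eqI, rule iffI)
  fix f :: "'a poly" assume "f \<in> Monics m"
  then have f: "monic f" "degree f = m" by (auto simp: Monics_def)
  then have nz: "f \<noteq> 0" by (simp add: monic_def)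
  have c: "coeffs f = butlast (coeffs f) @ [1]"
    using f nz by (metis append_butlast_last_id coeffs_eq_Nil last_coeffs_eq_coeff_degree monic_def)
  have "length (butlast (coeffs f)) = m" using f nz by (simp add: length_coeffs_degree)
  moreover have "f = Poly (butlast (coeffs f) @ [1])" using c by (metis Poly_coeffs)
  ultimately show "f \<in> (\<lambda>xs. Poly (xs @ [1])) ` {xs. set xs \<subseteq> UNIV \<and> length xs = m}" by blast
next
  fix f :: "'a poly" assume "f \<in> (\<lambda>xs. Poly (xs @ [1])) ` {xs. set xs \<subseteq> UNIV \<and> length xs = m}"
  then obtain xs where xs: "length xs = m" "f = Poly (xs @ [1])" by auto
  have cf: "coeffs f = xs @ [1]" using xs by (simp add: coeffs_Poly strip_while_snoc)
  have nz: "f \<noteq> 0" using cf by auto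
  have "degree f = m" using cf xs nz by (metis length_coeffs_degree length_append_singleton add_Suc_right add_0_right nat.inject)
  moreover have "lead_coeff f = 1" using cf nz by (metis last_coeffs_eq_coeff_degree last_snoc)
  ultimately show "f \<in> Monics m" using nz by (simp add: Monics_def monic_def)
qed

lemma card_Monics: "card (Monics m :: 'a::{finite,field_gcd} poly set) = CARD('a) ^ m"
proof -
  have inj: "inj_on (\<lambda>xs. Poly (xs @ [1::'a])) {xs::'a list. set xs \<subseteq> UNIV \<and> length xs = m}"
  proof (rule inj_onI)
    fix xs ys :: "'a list" assume "Poly (xs @ [1]) = Poly (ys @ [1])"
    then have "coeffs (Poly (xs @ [1])) = coeffs (Poly (ys @ [1]))" by simp
    then show "xs = ys" by (simp add: coeffs_Poly strip_while_snoc)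
  qed
  show ?thesis unfolding Monics_eq
    by (subst card_image[OF inj]) (use card_lists_length_eq[of "UNIV::'a set" m] in simp)
qed

lemma finite_Monics: "finite (Monics m :: 'a::{finite,field_gcd} poly set)"
  unfolding Monics_eq using finite_lists_length_eq[of "UNIV::'a set" m] by simp



lemma gcd_sq_coprime:
  fixes u v w :: "'a::field_gcd poly"
  assumes "monic u" "coprime u v" "u * v = w^2"
  shows "(gcd u w)^2 = u"
proof -
  have "(gcd u w)^2 = gcd (u^2) (w^2)" by simp
  also have "\<dots> = gcd (u*u) (u*v)" using assms(3) by (simp add: power2_eq_square)
  also have "\<dots> = normalize (u * gcd u v)" by (rule gcd_mult_left)
  also have "\<dots> = u" using assms by (simp add: monic_normalize)
  finally show ?thesis .
qed

lemma sq_dvd_sq: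
  fixes e h :: "'a::field_gcd poly"
  assumes "monic e" "monic h" "e^2 dvd h^2" shows "e dvd h"
proof -
  have "(gcd e h)^2 = gcd (e^2) (h^2)" by simp
  also have "\<dots> = e^2" using assms by (simp add: gcd_proj1_if_dvd monic_normalize monic_power normalize_power)
  finally have "gcd e h = e"
    by (rule monic_sq_unique[OF monic_gcd[OF monic_nz[OF assms(1)]] assms(1)])
  then show ?thesis by (metis gcd_dvd2)
qed

definition DivSet :: "'a::field_gcd poly \<Rightarrow> ('a poly \<times> 'a poly) set" where
  "DivSet f = {(h1, h2). monic h1 \<and> monic h2 \<and> h1 * h2 = f}"

definition Trip :: "nat \<Rightarrow> ('a::field_gcd poly \<times> 'a poly \<times> 'a poly) set" where
  "Trip m = {(e,s,t). monic e \<and> monic s \<and> monic t \<and> coprime s t \<and> degree e + degree s + degree t = m}"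

definition trip_map :: "'a::field_gcd poly \<times> 'a poly \<times> 'a poly \<Rightarrow> 'a poly \<times> 'a poly \<times> 'a poly" where
  "trip_map = (\<lambda>(e,s,t). (e*s*t, e*s^2, e*t^2))"

lemma trip_inj:
  fixes x y :: "'a::field_gcd poly \<times> 'a poly \<times> 'a poly"
  assumes A0: "x \<in> Trip m" "y \<in> Trip m" "trip_map x = trip_map y"
  shows "x = y"
proof -
    obtain e s t where xe: "x = (e,s,t)" by (cases x) auto
    obtain e' s' t' where ye: "y = (e',s',t')" by (cases y) auto
    have A: "(e,s,t) \<in> Trip m" "(e',s',t') \<in> Trip m" "trip_map (e,s,t) = trip_map (e',s',t')"
      using A0 xe ye by auto
    have m: "monic e" "monic s" "monic t" "coprime s t" "monic e'" "monic s'" "monic t'" "coprime s' t'"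
      using A(1,2) by (auto simp: Trip_def)
    have eq: "e*s^2 = e'*s'^2" "e*t^2 = e'*t'^2" using A(3) by (auto simp: trip_map_def)
    have g: "gcd (x*y^2) (x*z^2) = x" if "monic x" "coprime y z" for x y z :: "'a poly"
    proof -
      have "coprime (y^2) (z^2)" using that by simp
      then have "gcd (y^2) (z^2) = 1" by simp
      then show ?thesis using gcd_mult_left[of x "y^2" "z^2"] that by (simp add: monic_normalize)
    qed
    have ee: "e = e'" using g[of e s t] g[of e' s' t'] m eq by simp
    have enz: "e \<noteq> 0" using m by (simp add: monic_nz)
    have "s^2 = s'^2" "t^2 = t'^2" using eq ee enz by auto
    then have "s = s'" "t = t'" using m monic_sq_unique by blast+
    then show "x = y" using ee xe ye by simp
qed

lemma trip_img1:
  fixes x :: "'a::field_gcd poly \<times> 'a poly \<times> 'a poly"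
  assumes "x \<in> trip_map ` Trip m" shows "x \<in> Sigma (Monics m) (\<lambda>h. DivSet (h^2))"
proof -
    obtain e s t where x: "x = trip_map (e,s,t)" and T: "(e,s,t) \<in> Trip m" using assms by auto
    have m: "monic e" "monic s" "monic t" "degree e + degree s + degree t = m"
      using T by (auto simp: Trip_def)
    have "monic (e*s*t)" using m by (simp add: monic_mult)
    moreover have "degree (e*s*t) = m" using m by (simp add: monic_degree_mult monic_mult)
    moreover have "monic (e*s^2)" "monic (e*t^2)" using m by (simp_all add: monic_mult monic_power)
    moreover have "(e*s^2) * (e*t^2) = (e*s*t)^2" by (simp add: power2_eq_square algebra_simps)
    ultimately show "x \<in> Sigma (Monics m) (\<lambda>h. DivSet (h^2))"
      using x by (simp add: trip_map_def Monics_def DivSet_def)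
qed

lemma trip_img2:
  fixes x :: "'a::field_gcd poly \<times> 'a poly \<times> 'a poly"
  assumes "x \<in> Sigma (Monics m) (\<lambda>h. DivSet (h^2))" shows "x \<in> trip_map ` Trip m"
proof -
    from assms obtain h h1 h2 where x: "x = (h, h1, h2)" and hm: "monic h" "degree h = m"
      and d: "monic h1" "monic h2" "h1 * h2 = h^2"
      by (auto simp: Monics_def DivSet_def)
    define e where "e = gcd h1 h2"
    have h1nz: "h1 \<noteq> 0" using d by (simp add: monic_nz)
    have em: "monic e" unfolding e_def using h1nz by (rule monic_gcd)
    have enz: "e \<noteq> 0" using em by (simp add: monic_nz)
    have "e*e dvd h1*h2" unfolding e_def by (intro mult_dvd_mono) auto
    then have "e^2 dvd h^2" using d by (simp add: power2_eq_square)
    then have "e dvd h" by (rule sq_dvd_sq[OF em hm(1)])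
    then obtain w where hw: "h = e * w" by (rule dvdE)
    obtain u where hu: "h1 = e * u" unfolding e_def by (meson dvdE gcd_dvd1)
    obtain v where hv: "h2 = e * v" unfolding e_def by (meson dvdE gcd_dvd2)
    have wm: "monic w" using hm hw em monic_factor by blast
    have um: "monic u" using d hu em monic_factor by blast
    have vm: "monic v" using d hv em monic_factor by blast
    have cuv: "coprime u v"
    proof -
      have "gcd h1 h2 = normalize (e * gcd u v)" using hu hv gcd_mult_left by metis
      then have "e = e * gcd u v" using em vm by (simp add: e_def monic_normalize normalize_mult)
      then have "gcd u v = 1" using enz by (metis mult_cancel_left1)
      then show ?thesis by (simp add: coprime_iff_gcd_eq_1)
    qed
    have "e^2 * (u * v) = e^2 * w^2" using d hu hv hw by (simp add: power2_eq_square algebra_simps)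
    then have uvw: "u * v = w^2" using enz by simp
    define s where "s = gcd u w"
    define t where "t = gcd v w"
    have s2: "s^2 = u" unfolding s_def using um cuv uvw by (rule gcd_sq_coprime)
    have t2: "t^2 = v" unfolding t_def
      by (rule gcd_sq_coprime[OF vm, of u]) (use cuv uvw in \<open>auto simp: coprime_commute mult.commute\<close>)
    have sm: "monic s" unfolding s_def using um by (intro monic_gcd) (simp add: monic_nz)
    have tm: "monic t" unfolding t_def using vm by (intro monic_gcd) (simp add: monic_nz)
    have "(s*t)^2 = w^2" using s2 t2 uvw by (simp add: power_mult_distrib)
    then have stw: "s*t = w" by (rule monic_sq_unique[OF monic_mult[OF sm tm] wm])
    have cst: "coprime s t"
    proof -
      have "s dvd u" "t dvd v" unfolding s_def t_def by auto
      then show ?thesis using cuv coprime_divisors by blast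
    qed
    have "degree h = degree e + degree s + degree t"
      unfolding hw stw[symmetric] using em sm tm by (simp add: monic_degree_mult monic_mult)
    then have "(e,s,t) \<in> Trip m" using em sm tm cst hm by (simp add: Trip_def)
    moreover have "trip_map (e,s,t) = x"
      using x hw hu hv stw s2 t2 by (simp add: trip_map_def mult.assoc)
    ultimately show "x \<in> trip_map ` Trip m" by force
qed

lemma trip_bij: "bij_betw trip_map (Trip m :: ('a::field_gcd poly \<times> 'a poly \<times> 'a poly) set) (Sigma (Monics m) (\<lambda>h. DivSet (h^2)))"
proof (rule bij_betw_imageI)
  show "inj_on trip_map (Trip m :: ('a::field_gcd poly \<times> 'a poly \<times> 'a poly) set)"
    by (rule inj_onI) (rule trip_inj)
  show "trip_map ` (Trip m :: ('a::field_gcd poly \<times> 'a poly \<times> 'a poly) set) = Sigma (Monics m) (\<lambda>h. DivSet (h^2))"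
    by (intro set_eqI iffI) (erule trip_img1, erule trip_img2)
qed



definition Cop :: "nat \<Rightarrow> nat \<Rightarrow> ('a::field_gcd poly \<times> 'a poly) set" where
  "Cop b c = {(s,t). s \<in> Monics b \<and> t \<in> Monics c \<and> coprime s t}"

definition GS :: "nat \<Rightarrow> nat \<Rightarrow> ('a::field_gcd poly \<times> 'a poly \<times> 'a poly) set" where
  "GS b c = (\<Union>k\<in>{..min b c}. Monics k \<times> Cop (b-k) (c-k))"

lemma gs_inj:
  fixes x y :: "'a::field_gcd poly \<times> 'a poly \<times> 'a poly"
  assumes "x \<in> GS b c" "y \<in> GS b c" "(\<lambda>(d,s,t). (d*s, d*t)) x = (\<lambda>(d,s,t). (d*s, d*t)) y"
  shows "x = y"
proof -
  obtain d s t where xe: "x = (d,s,t)" by (cases x) auto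
  obtain d' s' t' where ye: "y = (d',s',t')" by (cases y) auto
  have m: "monic d" "monic s" "monic t" "coprime s t" "monic d'" "monic s'" "monic t'" "coprime s' t'"
    using assms(1,2) xe ye by (auto simp: GS_def Cop_def Monics_def)
  have eq: "d*s = d'*s'" "d*t = d'*t'" using assms(3) xe ye by auto
  have g: "gcd (x*y) (x*z) = x" if "monic x" "coprime y z" for x y z :: "'a poly"
    using gcd_mult_left[of x y z] that by (simp add: monic_normalize)
  have dd: "d = d'" using g[of d s t] g[of d' s' t'] m eq by simp
  have "d \<noteq> 0" using m by (simp add: monic_nz)
  then have "s = s'" "t = t'" using eq dd by auto
  then show ?thesis using xe ye dd by simp
qed

lemma gs_img1:
  fixes x :: "'a::field_gcd poly \<times> 'a poly"
  assumes "x \<in> (\<lambda>(d,s,t). (d*s, d*t)) ` GS b c" shows "x \<in> Monics b \<times> Monics c"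
proof -
  obtain d s t where x: "x = (d*s, d*t)" and T: "(d,s,t) \<in> GS b c" using assms by auto
  then obtain k where k: "k \<le> min b c" "d \<in> Monics k" "(s,t) \<in> Cop (b-k) (c-k)"
    by (auto simp: GS_def)
  then have m: "monic d" "monic s" "monic t" "degree d = k" "degree s = b - k" "degree t = c - k"
    by (auto simp: Cop_def Monics_def)
  then show ?thesis using x k(1) by (auto simp: Monics_def monic_mult monic_degree_mult)
qed

lemma gs_img2:
  fixes x :: "'a::field_gcd poly \<times> 'a poly"
  assumes "x \<in> Monics b \<times> Monics c" shows "x \<in> (\<lambda>(d,s,t). (d*s, d*t)) ` GS b c"
proof -
  obtain u v where x: "x = (u,v)" and u: "monic u" "degree u = b" and v: "monic v" "degree v = c"
    using assms by (auto simp: Monics_def)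
  define d where "d = gcd u v"
  have dm: "monic d" unfolding d_def using u by (intro monic_gcd) (simp add: monic_nz)
  have dnz: "d \<noteq> 0" using dm by (simp add: monic_nz)
  obtain s where us: "u = d * s" unfolding d_def by (meson dvdE gcd_dvd1)
  obtain t where vt: "v = d * t" unfolding d_def by (meson dvdE gcd_dvd2)
  have sm: "monic s" using u us dm monic_factor by blast
  have tm: "monic t" using v vt dm monic_factor by blast
  have cst: "coprime s t"
  proof -
    have "gcd u v = normalize (d * gcd s t)" using us vt gcd_mult_left by metis
    then have "d = d * gcd s t" using dm tm by (simp add: d_def monic_normalize normalize_mult)
    then have "gcd s t = 1" using dnz by (metis mult_cancel_left1)
    then show ?thesis by (simp add: coprime_iff_gcd_eq_1)
  qed
  have db: "degree u = degree d + degree s" "degree v = degree d + degree t"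
    using us vt dm sm tm by (simp_all add: monic_degree_mult)
  have "(d,s,t) \<in> GS b c"
    unfolding GS_def Cop_def Monics_def using db u v dm sm tm cst
    by (intro UN_I[of "degree d"]) auto
  then show ?thesis using x us vt by force
qed

lemma gs_bij: "bij_betw (\<lambda>(d,s,t). (d*s, d*t)) (GS b c :: ('a::field_gcd poly \<times> 'a poly \<times> 'a poly) set) (Monics b \<times> Monics c)"
proof (rule bij_betw_imageI)
  show "inj_on (\<lambda>(d,s,t). (d*s, d*t)) (GS b c :: ('a::field_gcd poly \<times> 'a poly \<times> 'a poly) set)"
    by (rule inj_onI) (rule gs_inj)
  show "(\<lambda>(d,s,t). (d*s, d*t)) ` (GS b c :: ('a::field_gcd poly \<times> 'a poly \<times> 'a poly) set) = Monics b \<times> Monics c"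
    by (intro set_eqI iffI) (erule gs_img1, erule gs_img2)
qed

lemma finite_Cop: "finite (Cop b c :: ('a::{finite,field_gcd} poly \<times> 'a poly) set)"
proof -
  have "Cop b c \<subseteq> (Monics b \<times> Monics c :: ('a poly \<times> 'a poly) set)" by (auto simp: Cop_def)
  then show ?thesis by (rule finite_subset) (simp add: finite_Monics)
qed

definition cop :: "'a::{finite,field_gcd} itself \<Rightarrow> nat \<Rightarrow> nat \<Rightarrow> nat" where
  "cop _ b c = card (Cop b c :: ('a poly \<times> 'a poly) set)"

lemma card_GS: "card (GS b c :: ('a::{finite,field_gcd} poly \<times> 'a poly \<times> 'a poly) set)
    = (\<Sum>k\<le>min b c. CARD('a)^k * cop TYPE('a) (b-k) (c-k))"
proof -
  have disj: "\<forall>i\<in>{..min b c}. \<forall>j\<in>{..min b c}. i \<noteq> j \<longrightarrow>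
      (Monics i \<times> Cop (b-i) (c-i)) \<inter> (Monics j \<times> Cop (b-j) (c-j)) = ({} :: ('a poly \<times> 'a poly \<times> 'a poly) set)"
    by (auto simp: Monics_def)
  show ?thesis unfolding GS_def
    by (subst card_UN_disjoint[OF _ _ disj]) (auto simp: finite_Monics finite_Cop card_Monics cop_def card_cartesian_product)
qed

lemma GS_identity: "(\<Sum>k\<le>min b c. CARD('a::{finite,field_gcd})^k * cop TYPE('a) (b-k) (c-k)) = CARD('a)^(b+c)"
proof -
  have "card (GS b c :: ('a poly \<times> 'a poly \<times> 'a poly) set) = card (Monics b \<times> Monics c :: ('a poly \<times> 'a poly) set)"
    by (rule bij_betw_same_card[OF gs_bij])
  then show ?thesis by (simp add: card_GS card_cartesian_product card_Monics power_add)
qed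

lemma cop_formula:
  "real (cop TYPE('a::{finite,field_gcd}) b c) = real CARD('a)^(b+c) - (if 0 < b \<and> 0 < c then real CARD('a)^(b+c-1) else 0)"
proof (cases "0 < b \<and> 0 < c")
  case False
  then have "min b c = 0" by auto
  then have "cop TYPE('a) b c = CARD('a)^(b+c)" using GS_identity[of b c, where 'a='a] by simp
  then show ?thesis using False by simp
next
  case True
  let ?q = "CARD('a)"
  have e1: "(\<Sum>k\<le>min b c. ?q^k * cop TYPE('a) (b-k) (c-k)) = ?q^(b+c)" by (rule GS_identity)
  have e2: "(\<Sum>k\<le>min (b-1) (c-1). ?q^k * cop TYPE('a) (b-1-k) (c-1-k)) = ?q^(b-1+(c-1))" by (rule GS_identity)
  have mm: "min b c = Suc (min (b-1) (c-1))" using True by auto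
  have "(\<Sum>k\<le>min b c. ?q^k * cop TYPE('a) (b-k) (c-k))
      = cop TYPE('a) b c + (\<Sum>k\<le>min (b-1) (c-1). ?q^(Suc k) * cop TYPE('a) (b - Suc k) (c - Suc k))"
    unfolding mm sum.atMost_Suc_shift by simp
  also have "(\<Sum>k\<le>min (b-1) (c-1). ?q^(Suc k) * cop TYPE('a) (b - Suc k) (c - Suc k))
      = ?q * (\<Sum>k\<le>min (b-1) (c-1). ?q^k * cop TYPE('a) (b-1-k) (c-1-k))"
    by (simp add: sum_distrib_left mult.assoc)
  finally have "cop TYPE('a) b c + ?q * ?q^(b-1+(c-1)) = ?q^(b+c)" using e1 e2 by simp
  moreover have "?q * ?q^(b-1+(c-1)) = ?q^(b+c-1)" using True
  proof -
    have "b+c-1 = Suc (b-1+(c-1))" using True by arith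
    then show ?thesis by (simp only: power_Suc)
  qed
  ultimately have "cop TYPE('a) b c + ?q^(b+c-1) = ?q^(b+c)" by metis
  then have "real (cop TYPE('a) b c) + real ?q^(b+c-1) = real ?q^(b+c)"
    by (metis of_nat_add of_nat_power)
  then show ?thesis using True by simp
qed



lemma finite_DivSet:
  fixes f :: "'a::{finite,field_gcd} poly"
  assumes "f \<noteq> 0" shows "finite (DivSet f)"
proof -
  let ?U = "\<Union>d\<in>{..degree f}. (Monics d :: 'a poly set)"
  have "DivSet f \<subseteq> ?U \<times> ?U"
  proof clarify
    fix h1 h2 assume "(h1, h2) \<in> DivSet f"
    then have h: "monic h1" "monic h2" "h1 * h2 = f" by (auto simp: DivSet_def)
    then have "degree f = degree h1 + degree h2" by (metis monic_degree_mult)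
    then show "h1 \<in> ?U \<and> h2 \<in> ?U" using h by (auto simp: Monics_def)
  qed
  moreover have "finite (?U \<times> ?U)" by (auto simp: finite_Monics)
  ultimately show ?thesis by (rule finite_subset)
qed

lemma sum_divisor_count:
  "(\<Sum>h\<in>(Monics m :: 'a::{finite,field_gcd} poly set). divisor_count (h^2))
    = card (Trip m :: ('a poly \<times> 'a poly \<times> 'a poly) set)"
proof -
  have "card (Trip m :: ('a poly \<times> 'a poly \<times> 'a poly) set) = card (Sigma (Monics m :: 'a poly set) (\<lambda>h. DivSet (h^2)))"
    by (rule bij_betw_same_card[OF trip_bij])
  also have "\<dots> = (\<Sum>h\<in>Monics m. card (DivSet ((h::'a poly)^2)))"
  proof (rule card_SigmaI[OF finite_Monics], rule ballI)
    fix h :: "'a poly" assume "h \<in> Monics m"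
    then have "h^2 \<noteq> 0" by (simp add: Monics_def monic_nz)
    then show "finite (DivSet (h^2))" by (rule finite_DivSet)
  qed
  finally show ?thesis by (simp add: divisor_count_def DivSet_def)
qed

lemma Trip_eq: "(Trip m :: ('a::field_gcd poly \<times> 'a poly \<times> 'a poly) set) = (\<Union>b\<in>{..m}. \<Union>c\<in>{..m-b}. (Monics (m-b-c) :: 'a poly set) \<times> Cop b c)"
proof (rule set_eqI, rule iffI)
  fix x assume "x \<in> (Trip m :: ('a poly \<times> 'a poly \<times> 'a poly) set)"
  then obtain e s t where x: "x = (e,s,t)" "monic e" "monic s" "monic t" "coprime s t"
    "degree e + degree s + degree t = m" by (auto simp: Trip_def)
  show "x \<in> (\<Union>b\<in>{..m}. \<Union>c\<in>{..m-b}. (Monics (m-b-c) :: 'a poly set) \<times> Cop b c)"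
    using x by (intro UN_I[of "degree s"] UN_I[of "degree t"]) (auto simp: Monics_def Cop_def)
next
  fix x assume "x \<in> (\<Union>b\<in>{..m}. \<Union>c\<in>{..m-b}. (Monics (m-b-c) :: 'a poly set) \<times> (Cop b c :: ('a poly \<times> 'a poly) set))"
  then show "x \<in> (Trip m :: ('a::field_gcd poly \<times> 'a poly \<times> 'a poly) set)" by (auto simp: Monics_def Cop_def Trip_def)
qed

lemma card_Trip:
  "card (Trip m :: ('a::{finite,field_gcd} poly \<times> 'a poly \<times> 'a poly) set)
    = (\<Sum>b\<le>m. \<Sum>c\<le>m-b. CARD('a)^(m-b-c) * cop TYPE('a) b c)"
proof -
  have inner: "card (\<Union>c\<in>{..m-b}. (Monics (m-b-c) :: 'a poly set) \<times> (Cop b c :: ('a poly \<times> 'a poly) set))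
      = (\<Sum>c\<le>m-b. CARD('a)^(m-b-c) * cop TYPE('a) b c)" for b
  proof -
    have disj: "\<forall>i\<in>{..m-b}. \<forall>j\<in>{..m-b}. i \<noteq> j \<longrightarrow>
      (Monics (m-b-i) \<times> Cop b i) \<inter> (Monics (m-b-j) \<times> Cop b j) = ({} :: ('a poly \<times> 'a poly \<times> 'a poly) set)"
      by (auto simp: Cop_def Monics_def)
    show ?thesis
      by (subst card_UN_disjoint[OF _ _ disj]) (auto simp: finite_Monics finite_Cop card_Monics cop_def card_cartesian_product)
  qed
  have disj: "\<forall>i\<in>{..m}. \<forall>j\<in>{..m}. i \<noteq> j \<longrightarrow>
      (\<Union>c\<in>{..m-i}. Monics (m-i-c) \<times> Cop i c) \<inter> (\<Union>c\<in>{..m-j}. Monics (m-j-c) \<times> Cop j c) = ({} :: ('a poly \<times> 'a poly \<times> 'a poly) set)"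
    by (auto simp: Cop_def Monics_def)
  have fin: "finite (\<Union>c\<in>{..m-b}. (Monics (m-b-c) :: 'a poly set) \<times> (Cop b c :: ('a poly \<times> 'a poly) set))" for b
    by (auto simp: finite_Monics finite_Cop)
  show ?thesis unfolding Trip_eq
    apply (subst card_UN_disjoint[OF _ _ disj])
      apply (rule finite_atMost)
     apply (rule ballI, rule fin)
    apply (rule sum.cong[OF refl], rule inner)
    done
qed

lemma sum_rev_atMost: "(\<Sum>b\<le>m. (f::nat\<Rightarrow>real) (m - b)) = (\<Sum>b\<le>m. f b)"
  by (rule sum.reindex_bij_witness[where i="\<lambda>b. m - b" and j="\<lambda>b. m - b"]) auto

lemma sum_lin: "(\<Sum>b\<le>m. real b + 1) = (real m + 1) * (real m + 2) / 2"
  by (induction m) (auto simp: field_simps)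

lemma sum_lin0: "(\<Sum>b\<le>m. real b) = real m * (real m + 1) / 2"
  by (induction m) (auto simp: field_simps)

lemma D_formula:
  assumes q: "real CARD('a::{finite,field_gcd}) > 0"
  shows "real (card (Trip m :: ('a poly \<times> 'a poly \<times> 'a poly) set)) / real CARD('a)^m
    = (real m + 1) * (real m + 2) / 2 - real m * (real m - 1) / 2 / real CARD('a)"
proof -
  let ?q = "real CARD('a)"
  have tm: "real (CARD('a)^(m-b-c) * cop TYPE('a) b c) / ?q^m = 1 - (if 0 < b \<and> 0 < c then 1 / ?q else 0)"
    if "b \<le> m" "c \<le> m - b" for b c
  proof -
    have bc: "m = (m-b-c) + (b+c)" using that by simp
    have "?q^m = ?q^(m-b-c) * ?q^(b+c)" by (subst bc) (simp add: power_add)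
    moreover have "?q^(b+c) = ?q * ?q^(b+c-1)" if "0 < b" "0 < c"
    proof -
      have "b + c = Suc (b+c-1)" using that by arith
      then show ?thesis by (metis power_Suc)
    qed
    ultimately show ?thesis using q by (auto simp: cop_formula field_simps)
  qed
  have inner: "(\<Sum>c\<le>n. 1 - (if 0 < b \<and> 0 < c then 1 / ?q else 0)) = real n + 1 - (if 0 < b then real n / ?q else 0)" for b n
  proof (cases "0 < b")
    case True
    have "(\<Sum>c\<le>n. 1 - (if 0 < c then 1 / ?q else 0)) = real n + 1 - real n / ?q"
      by (induction n) (auto simp: field_simps)
    then show ?thesis using True by simp
  qed simp
  have "real (card (Trip m :: ('a poly \<times> 'a poly \<times> 'a poly) set)) / ?q^m
      = (\<Sum>b\<le>m. \<Sum>c\<le>m-b. real (CARD('a)^(m-b-c) * cop TYPE('a) b c) / ?q^m)"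
    by (simp add: card_Trip sum_divide_distrib)
  also have "\<dots> = (\<Sum>b\<le>m. \<Sum>c\<le>m-b. 1 - (if 0 < b \<and> 0 < c then 1 / ?q else 0))"
    by (intro sum.cong refl tm) auto
  also have "\<dots> = (\<Sum>b\<le>m. real (m-b) + 1 - (if 0 < b then real (m-b) / ?q else 0))"
    by (simp add: inner)
  also have "\<dots> = (\<Sum>b\<le>m. real (m-b) + 1) - (\<Sum>b\<le>m. real (m-b)) / ?q + real m / ?q"
  proof -
    have "(\<Sum>b\<le>m. (if 0 < b then real (m-b) / ?q else 0)) = (\<Sum>b\<le>m. real (m-b) / ?q) - real m / ?q"
    proof -
      have "(\<Sum>b\<le>m. real (m-b) / ?q) = (\<Sum>b\<le>m. (if 0 < b then real (m-b) / ?q else 0)) + real m / ?q"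
      proof -
        have "(\<Sum>b\<le>m. real (m-b) / ?q) = (\<Sum>b\<le>m. (if 0 < b then real (m-b) / ?q else 0) + (if b = 0 then real (m-b) / ?q else 0))"
          by (intro sum.cong) auto
        also have "\<dots> = (\<Sum>b\<le>m. (if 0 < b then real (m-b) / ?q else 0)) + (\<Sum>b\<le>m. (if b = 0 then real (m-b) / ?q else 0))"
          by (rule sum.distrib)
        also have "(\<Sum>b\<le>m. (if b = 0 then real (m-b) / ?q else 0)) = real m / ?q"
          by (simp add: sum.delta)
        finally show ?thesis .
      qed
      then show ?thesis by simp
    qed
    moreover have "(\<Sum>b\<le>m. real (m-b) / ?q) = (\<Sum>b\<le>m. real (m-b)) / ?q"
      by (rule sum_divide_distrib[symmetric])
    moreover have "(\<Sum>b\<le>m. real (m-b) + 1 - (if 0 < b then real (m-b) / ?q else 0))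
       = (\<Sum>b\<le>m. real (m-b) + 1) - (\<Sum>b\<le>m. (if 0 < b then real (m-b) / ?q else 0))"
      by (rule sum_subtractf)
    ultimately show ?thesis by simp
  qed
  also have "\<dots> = (real m + 1) * (real m + 2) / 2 - real m * (real m - 1) / 2 / ?q"
  proof -
    have a: "(\<Sum>b\<le>m. real (m-b) + 1) = (real m + 1) * (real m + 2) / 2"
      using sum_rev_atMost[of "\<lambda>b. real b + 1" m] sum_lin[of m] by simp
    have b: "(\<Sum>b\<le>m. real (m-b)) = real m * (real m + 1) / 2"
      using sum_rev_atMost[of "\<lambda>b. real b" m] sum_lin0[of m] by simp
    show ?thesis unfolding a b using q by (simp add: field_simps)
  qed
  finally show ?thesis .
qed



lemma irreducible_degree_pos:
  fixes P :: "'a::field_gcd poly" assumes "irreducible P" shows "degree P \<ge> 1"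
proof (rule ccontr)
  assume "\<not> degree P \<ge> 1"
  then have "degree P = 0" by simp
  moreover have "P \<noteq> 0" using assms by auto
  ultimately have "is_unit P" by (simp add: is_unit_iff_degree)
  with assms show False by (auto simp: irreducible_def)
qed

lemma monic_irreducible_prime:
  fixes P :: "'a::field_gcd poly" assumes "monic P" "irreducible P" shows "prime P"
  using assms by (simp add: prime_def prime_elem_iff_irreducible monic_normalize)

lemma prime_monic:
  fixes P :: "'a::field_gcd poly" assumes "prime P" shows "monic P" "irreducible P"
  using assms by (auto simp: prime_def prime_elem_iff_irreducible intro!: normalize_monic)

definition XP :: "nat \<Rightarrow> ('a::field_gcd poly \<times> nat) set" where
  "XP n = {(P,k). monic P \<and> irreducible P \<and> 1 \<le> k \<and> k * degree P \<le> n}"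

lemma finite_XP: "finite (XP n :: ('a::{finite,field_gcd} poly \<times> nat) set)"
proof -
  have "XP n \<subseteq> (\<Union>d\<in>{..n}. (Monics d :: 'a poly set)) \<times> {..n}"
  proof clarify
    fix P :: "'a poly" and k assume "(P,k) \<in> XP n"
    then have h: "monic P" "irreducible P" "1 \<le> k" "k * degree P \<le> n" by (auto simp: XP_def)
    have "degree P \<ge> 1" using h(2) by (rule irreducible_degree_pos)
    then have a: "degree P \<le> k * degree P" "k \<le> k * degree P"
      using h(3) mult_le_mono1[of 1 k "degree P"] mult_le_mono2[of 1 "degree P" k] by simp_all
    have "degree P \<le> n" "k \<le> n" using a h(4) by linarith+
    then show "P \<in> (\<Union>d\<in>{..n}. Monics d) \<and> k \<in> {..n}" using h by (auto simp: Monics_def)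
  qed
  then show ?thesis by (rule finite_subset) (auto simp: finite_Monics)
qed

lemma deg_as_sum:
  fixes f :: "'a::{finite,field_gcd} poly"
  assumes f: "monic f" "degree f \<le> n"
  shows "(\<Sum>x\<in>XP n. if fst x ^ snd x dvd f then degree (fst x) else 0) = degree f"
proof -
  have fnz: "f \<noteq> 0" using f by (simp add: monic_nz)
  have set_eq: "{x \<in> XP n. fst x ^ snd x dvd f} = Sigma (prime_factors f) (\<lambda>P. {1..multiplicity P f})"
  proof (rule set_eqI, rule iffI)
    fix x assume x: "x \<in> {x \<in> XP n. fst x ^ snd x dvd f}"
    obtain P k where xe: "x = (P,k)" by (cases x)
    have h: "monic P" "irreducible P" "1 \<le> k" "P^k dvd f" using x xe by (auto simp: XP_def)
    have pP: "prime P" by (rule monic_irreducible_prime[OF h(1,2)])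
    have "P dvd f" using h(3,4) by (meson dvd_power dvd_trans le_numeral_extra(2) less_le_trans zero_less_one)
    then have "P \<in> prime_factors f" using pP fnz by (simp add: in_prime_factors_iff)
    moreover have "k \<le> multiplicity P f"
      using h(4) fnz pP by (intro multiplicity_geI) (auto simp: prime_def prime_elem_def)
    ultimately show "x \<in> Sigma (prime_factors f) (\<lambda>P. {1..multiplicity P f})" using xe h by auto
  next
    fix x assume x: "x \<in> Sigma (prime_factors f) (\<lambda>P. {1..multiplicity P f})"
    obtain P k where xe: "x = (P,k)" by (cases x)
    have h: "P \<in> prime_factors f" "1 \<le> k" "k \<le> multiplicity P f" using x xe by auto
    have pP: "prime P" using h(1) by (simp add: in_prime_factors_iff)
    have dv: "P^k dvd f" using h(3) by (rule multiplicity_dvd')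
    have "degree (P^k) \<le> degree f" using dv fnz by (rule dvd_imp_degree_le)
    moreover have "degree (P^k) = k * degree P"
      using pP by (simp add: degree_power_eq prime_def prime_elem_def)
    ultimately have "k * degree P \<le> n" using f by linarith
    then show "x \<in> {x \<in> XP n. fst x ^ snd x dvd f}"
      using xe h dv prime_monic[OF pP] by (simp add: XP_def)
  qed
  have "(\<Sum>x\<in>XP n. if fst x ^ snd x dvd f then degree (fst x) else 0)
      = (\<Sum>x\<in>{x \<in> XP n. fst x ^ snd x dvd f}. degree (fst x))"
    by (simp add: sum.inter_filter finite_XP)
  also have "\<dots> = (\<Sum>x\<in>Sigma (prime_factors f) (\<lambda>P. {1..multiplicity P f}). degree (fst x))"
    by (simp only: set_eq)
  also have "\<dots> = (\<Sum>P\<in>prime_factors f. \<Sum>k\<in>{1..multiplicity P f}. degree P)"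
  proof -
    have "(\<Sum>P\<in>prime_factors f. \<Sum>k\<in>{1..multiplicity P f}. degree P)
        = (\<Sum>(P,k)\<in>Sigma (prime_factors f) (\<lambda>P. {1..multiplicity P f}). degree P)"
      by (rule sum.Sigma) auto
    then show ?thesis by (simp add: case_prod_unfold)
  qed
  also have "\<dots> = (\<Sum>P\<in>prime_factors f. multiplicity P f * degree P)" by simp
  also have "\<dots> = degree (\<Prod>P\<in>prime_factors f. P ^ multiplicity P f)"
  proof -
    have "degree (\<Prod>P\<in>prime_factors f. P ^ multiplicity P f) = (\<Sum>P\<in>prime_factors f. degree (P ^ multiplicity P f))"
      by (rule degree_prod_sum_eq) (auto simp: in_prime_factors_iff)
    also have "\<dots> = (\<Sum>P\<in>prime_factors f. multiplicity P f * degree P)"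
      by (intro sum.cong refl) (auto simp: degree_power_eq in_prime_factors_iff)
    finally show ?thesis by simp
  qed
  also have "\<dots> = degree f" using fnz f by (simp add: prod_prime_factors monic_normalize)
  finally show ?thesis .
qed

lemma card_mult_Monics:
  fixes P :: "'a::{finite,field_gcd} poly"
  assumes P: "monic P" and le: "degree P \<le> n"
  shows "card {f \<in> Monics n. P dvd f} = CARD('a)^(n - degree P)"
proof -
  have "bij_betw (\<lambda>g. P * g) (Monics (n - degree P)) {f \<in> Monics n. P dvd f}"
  proof (rule bij_betw_imageI)
    show "inj_on (\<lambda>g. P * g) (Monics (n - degree P))"
      using P by (auto intro!: inj_onI simp: monic_nz)
    show "(\<lambda>g. P * g) ` Monics (n - degree P) = {f \<in> Monics n. P dvd f}"
    proof (rule set_eqI, rule iffI)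
      fix f assume "f \<in> (\<lambda>g. P * g) ` Monics (n - degree P)"
      then obtain g where g: "f = P * g" "monic g" "degree g = n - degree P" by (auto simp: Monics_def)
      then show "f \<in> {f \<in> Monics n. P dvd f}" using P le
        by (auto simp: Monics_def monic_mult monic_degree_mult)
    next
      fix f assume "f \<in> {f \<in> Monics n. P dvd f}"
      then obtain g where g: "f = P * g" "monic f" "degree f = n" by (auto simp: Monics_def elim!: dvdE)
      have gm: "monic g" using P g monic_factor by blast
      then have "degree g = n - degree P" using g P by (simp add: monic_degree_mult)
      then show "f \<in> (\<lambda>g. P * g) ` Monics (n - degree P)" using g gm by (auto simp: Monics_def)
    qed
  qed
  then show ?thesis by (simp add: bij_betw_same_card[symmetric] card_Monics)
qed

definition Lsum :: "'a::{finite,field_gcd} itself \<Rightarrow> nat \<Rightarrow> nat" where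
  "Lsum _ m = (\<Sum>x\<in>{x\<in>(XP m :: ('a poly \<times> nat) set). snd x * degree (fst x) = m}. degree (fst x))"

lemma n_qn:
  "n * CARD('a::{finite,field_gcd})^n = (\<Sum>m\<in>{1..n}. CARD('a)^(n-m) * Lsum TYPE('a) m)"
proof -
  let ?q = "CARD('a)"
  have "n * ?q^n = (\<Sum>f\<in>(Monics n :: 'a poly set). degree f)"
    by (simp add: Monics_def card_Monics[unfolded Monics_def])
  also have "\<dots> = (\<Sum>f\<in>(Monics n :: 'a poly set). \<Sum>x\<in>XP n. if fst x ^ snd x dvd f then degree (fst x) else 0)"
    by (intro sum.cong refl deg_as_sum[symmetric]) (auto simp: Monics_def)
  also have "\<dots> = (\<Sum>x\<in>XP n. \<Sum>f\<in>(Monics n :: 'a poly set). if fst x ^ snd x dvd f then degree (fst x) else 0)"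
    by (rule sum.swap)
  also have "\<dots> = (\<Sum>x\<in>(XP n :: ('a poly \<times> nat) set). degree (fst x) * ?q^(n - snd x * degree (fst x)))"
  proof (intro sum.cong refl)
    fix x assume x: "x \<in> (XP n :: ('a poly \<times> nat) set)"
    obtain P k where xe: "x = (P,k)" by (cases x)
    have h: "monic P" "k * degree P \<le> n" using x xe by (auto simp: XP_def)
    have "(\<Sum>f\<in>(Monics n :: 'a poly set). if P ^ k dvd f then degree P else 0)
        = (\<Sum>f\<in>{f\<in>Monics n. P ^ k dvd f}. degree P)"
      by (rule sum.inter_filter[OF finite_Monics, symmetric])
    also have "\<dots> = degree P * card {f\<in>Monics n. P ^ k dvd f}" by (simp add: mult.commute)
    also have "card {f\<in>Monics n. P ^ k dvd f} = ?q^(n - k * degree P)"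
      using card_mult_Monics[of "P^k" n] h by (simp add: monic_power degree_power_eq monic_nz)
    finally show "(\<Sum>f\<in>(Monics n :: 'a poly set). if fst x ^ snd x dvd f then degree (fst x) else 0)
        = degree (fst x) * ?q^(n - snd x * degree (fst x))" unfolding xe fst_conv snd_conv .
  qed
  also have "\<dots> = (\<Sum>m\<in>{1..n}. \<Sum>x\<in>{x\<in>(XP n :: ('a poly \<times> nat) set). snd x * degree (fst x) = m}.
                     degree (fst x) * ?q^(n - snd x * degree (fst x)))"
  proof (rule sum.group[symmetric])
    show "finite (XP n :: ('a poly \<times> nat) set)" by (rule finite_XP)
    show "finite {1..n}" by simp
    show "(\<lambda>x. snd x * degree (fst x)) ` (XP n :: ('a poly \<times> nat) set) \<subseteq> {1..n}"
    proof clarify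
      fix P :: "'a poly" and k assume "(P,k) \<in> XP n"
      then have "irreducible P" "1 \<le> k" "k * degree P \<le> n" by (auto simp: XP_def)
      moreover from this(1) have "degree P \<ge> 1" by (rule irreducible_degree_pos)
      ultimately show "snd (P,k) * degree (fst (P,k)) \<in> {1..n}" by simp
    qed
  qed
  also have "\<dots> = (\<Sum>m\<in>{1..n}. ?q^(n-m) * Lsum TYPE('a) m)"
  proof (intro sum.cong refl)
    fix m assume m: "m \<in> {1..n}"
    have se: "{x\<in>(XP n :: ('a poly \<times> nat) set). snd x * degree (fst x) = m}
        = {x\<in>(XP m :: ('a poly \<times> nat) set). snd x * degree (fst x) = m}"
      using m by (auto simp: XP_def)
    show "(\<Sum>x\<in>{x\<in>(XP n :: ('a poly \<times> nat) set). snd x * degree (fst x) = m}.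
                     degree (fst x) * ?q^(n - snd x * degree (fst x))) = ?q^(n-m) * Lsum TYPE('a) m"
      unfolding se Lsum_def sum_distrib_left by (intro sum.cong refl) simp
  qed
  finally show ?thesis .
qed

lemma Lsum_eq: assumes "n \<ge> 1" shows "Lsum TYPE('a::{finite,field_gcd}) n = CARD('a)^n"
proof -
  let ?q = "CARD('a)"
  obtain n' where n: "n = Suc n'" using assms by (cases n) auto
  have "(\<Sum>m\<in>{1..Suc n'}. ?q^(Suc n'-m) * Lsum TYPE('a) m)
      = Lsum TYPE('a) (Suc n') + (\<Sum>m\<in>{1..n'}. ?q^(Suc n'-m) * Lsum TYPE('a) m)"
    by (simp add: sum.atLeast1_atMost_eq sum.atMost_Suc)
  also have "(\<Sum>m\<in>{1..n'}. ?q^(Suc n'-m) * Lsum TYPE('a) m) = ?q * (\<Sum>m\<in>{1..n'}. ?q^(n'-m) * Lsum TYPE('a) m)"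
    by (simp add: sum_distrib_left Suc_diff_le mult.assoc)
  also have "(\<Sum>m\<in>{1..n'}. ?q^(n'-m) * Lsum TYPE('a) m) = n' * ?q^n'" by (rule n_qn[symmetric])
  finally have "Suc n' * ?q^Suc n' = Lsum TYPE('a) (Suc n') + ?q * (n' * ?q^n')"
    using n_qn[of "Suc n'", where 'a='a] by simp
  then show ?thesis using n by (simp add: algebra_simps)
qed



definition Irr :: "nat \<Rightarrow> 'a::field_gcd poly set" where
  "Irr n = {P. monic P \<and> irreducible P \<and> degree P = n}"

lemma finite_Irr: "finite (Irr n :: 'a::{finite,field_gcd} poly set)"
  by (rule finite_subset[OF _ finite_Monics[of n]]) (auto simp: Irr_def Monics_def)

lemma Lsum_split:
  assumes n: "n \<ge> 1"
  shows "n * card (Irr n :: 'a::{finite,field_gcd} poly set) \<le> Lsum TYPE('a) n"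
    "Lsum TYPE('a) n \<le> n * card (Irr n :: 'a poly set) + n * ((n div 2 + 1) * CARD('a)^(n div 2) * (n+1))"
proof -
  let ?q = "CARD('a)"
  define A where "A = {x\<in>(XP n :: ('a poly \<times> nat) set). snd x * degree (fst x) = n}"
  define A1 where "A1 = {x\<in>A. snd x = 1}"
  define A2 where "A2 = {x\<in>A. snd x \<noteq> 1}"
  have finA: "finite A" unfolding A_def by (rule finite_subset[OF _ finite_XP[of n]]) auto
  have AU: "A = A1 \<union> A2" "A1 \<inter> A2 = {}" unfolding A1_def A2_def by auto
  have fin12: "finite A1" "finite A2" using finA unfolding A1_def A2_def by auto
  have L: "Lsum TYPE('a) n = (\<Sum>x\<in>A1. degree (fst x)) + (\<Sum>x\<in>A2. degree (fst x))"
    unfolding Lsum_def A_def[symmetric] AU(1) by (rule sum.union_disjoint[OF fin12 AU(2)])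
  have A1e: "A1 = (\<lambda>P. (P,1)) ` Irr n" unfolding A1_def A_def
    by (auto simp: XP_def Irr_def image_iff)
  have S1: "(\<Sum>x\<in>A1. degree (fst x)) = n * card (Irr n :: 'a poly set)"
  proof -
    have "(\<Sum>x\<in>A1. degree (fst x)) = (\<Sum>P\<in>(Irr n :: 'a poly set). degree (fst (P,1::nat)))"
      unfolding A1e by (subst sum.reindex) (auto intro: inj_onI)
    also have "\<dots> = (\<Sum>P\<in>(Irr n :: 'a poly set). n)" by (intro sum.cong refl) (auto simp: Irr_def)
    finally show ?thesis by simp
  qed
  show "n * card (Irr n :: 'a poly set) \<le> Lsum TYPE('a) n" using L S1 by simp
  have S2': "(\<Sum>x\<in>A2. degree (fst x)) \<le> of_nat (card A2) * n"
  proof (rule sum_bounded_above)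
    fix x assume "x \<in> A2"
    then obtain P k where x: "x = (P,k)" "k * degree P = n" "1 \<le> k" unfolding A2_def A_def XP_def by auto
    have "degree P \<le> k * degree P" using x(3) mult_le_mono1[of 1 k "degree P"] by simp
    then show "degree (fst x) \<le> n" using x by simp
  qed
  then have S2: "(\<Sum>x\<in>A2. degree (fst x)) \<le> card A2 * n" by simp
  let ?U = "(\<Union>d\<in>{..n div 2}. (Monics d :: 'a poly set)) \<times> {..n}"
  have sub: "A2 \<subseteq> ?U"
  proof clarify
    fix P :: "'a poly" and k assume "(P,k) \<in> A2"
    then have h: "k * degree P = n" "1 \<le> k" "k \<noteq> 1" "monic P" "irreducible P"
      unfolding A2_def A_def XP_def by auto
    have dp: "degree P \<ge> 1" using h(5) by (rule irreducible_degree_pos)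
    have "2 * degree P \<le> k * degree P" using h(2,3) mult_le_mono1[of 2 k "degree P"] by simp
    then have "degree P \<le> n div 2" using h(1) by linarith
    moreover have "k \<le> n" using dp h(1) mult_le_mono2[of 1 "degree P" k] by simp
    ultimately show "P \<in> (\<Union>d\<in>{..n div 2}. Monics d) \<and> k \<in> {..n}" using h by (auto simp: Monics_def)
  qed
  have cU: "card (\<Union>d\<in>{..n div 2}. (Monics d :: 'a poly set)) \<le> (n div 2 + 1) * ?q^(n div 2)"
  proof -
    have "card (\<Union>d\<in>{..n div 2}. (Monics d :: 'a poly set)) \<le> (\<Sum>d\<le>n div 2. card (Monics d :: 'a poly set))"
      by (rule card_UN_le) simp
    also have "\<dots> = (\<Sum>d\<le>n div 2. ?q^d)" by (simp add: card_Monics)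
    also have "\<dots> \<le> of_nat (card {..n div 2}) * ?q^(n div 2)"
      by (rule sum_bounded_above) (auto intro: power_increasing)
    finally show ?thesis by simp
  qed
  have "card A2 \<le> card ?U" by (rule card_mono) (auto simp: finite_Monics sub)
  also have "\<dots> = card (\<Union>d\<in>{..n div 2}. (Monics d :: 'a poly set)) * (n+1)"
    by (simp add: card_cartesian_product)
  also have "\<dots> \<le> (n div 2 + 1) * ?q^(n div 2) * (n+1)"
    using cU by (rule mult_le_mono1)
  finally have "card A2 \<le> (n div 2 + 1) * ?q^(n div 2) * (n+1)" .
  with S2 have "(\<Sum>x\<in>A2. degree (fst x)) \<le> n * ((n div 2 + 1) * ?q^(n div 2) * (n+1))"
    by (metis (no_types, lifting) dual_order.trans mult.commute mult_le_mono2)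
  then show "Lsum TYPE('a) n \<le> n * card (Irr n :: 'a poly set) + n * ((n div 2 + 1) * CARD('a)^(n div 2) * (n+1))"
    using L S1 by simp
qed



lemma Sq_eq:
  assumes g: "g \<ge> 1"
  shows "{f::'a::field_gcd poly. monic f \<and> degree f \<le> 2*g-1 \<and> is_monic_square f}
       = (\<lambda>h. h^2) ` (\<Union>m\<in>{..<g}. Monics m)"
proof (rule set_eqI, rule iffI)
  fix f :: "'a poly" assume "f \<in> {f. monic f \<and> degree f \<le> 2*g-1 \<and> is_monic_square f}"
  then obtain h where h: "monic h" "f = h^2" "degree f \<le> 2*g-1" by (auto simp: is_monic_square_def)
  have "degree f = 2 * degree h" using h by (simp add: power2_eq_square monic_degree_mult)
  then have "degree h < g" using h g by linarith
  then show "f \<in> (\<lambda>h. h^2) ` (\<Union>m\<in>{..<g}. Monics m)" using h by (auto simp: Monics_def)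
next
  fix f :: "'a poly" assume "f \<in> (\<lambda>h. h^2) ` (\<Union>m\<in>{..<g}. Monics m)"
  then obtain h where h: "monic h" "f = h^2" "degree h < g" by (auto simp: Monics_def)
  have "degree f = 2 * degree h" using h by (simp add: power2_eq_square monic_degree_mult)
  then have "degree f \<le> 2*g-1" using h by linarith
  moreover have "monic f" using h by (simp add: monic_power)
  ultimately show "f \<in> {f. monic f \<and> degree f \<le> 2*g-1 \<and> is_monic_square f}"
    using h by (auto simp: is_monic_square_def)
qed

lemma sum_quad: assumes "Q \<noteq> 0" shows "(\<Sum>m<g. (real m + 1) * (real m + 2) / 2 - real m * (real m - 1) / 2 / Q)
   = real g * (real g + 1) * (real g + 2) / 6 - real g * (real g - 1) * (real g - 2) / 6 / Q"
proof (induction g)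
  case (Suc g)
  show ?case unfolding sum.lessThan_Suc Suc.IH using assms
    by (simp add: field_simps)
qed simp

lemma chi_square:
  fixes P h :: "'a::field_gcd poly"
  assumes P: "irreducible P" and h: "monic h" and deg: "2 * degree h < degree P"
  shows "chi P (h^2) = 1"
proof -
  have hnz: "h \<noteq> 0" using h by (simp add: monic_nz)
  have "poly_legendre P Q ^ multiplicity Q (h^2) = 1" if Q: "Q \<in> prime_factors (h^2)" for Q
  proof -
    have pQ: "prime Q" and Qd: "Q dvd h^2" using Q by (auto simp: in_prime_factors_iff)
    have "degree Q \<le> degree (h^2)" using Qd hnz by (simp add: dvd_imp_degree_le)
    also have "\<dots> = 2 * degree h" by (simp add: degree_power_eq hnz)
    finally have dQ: "degree Q < degree P" using deg by simp
    have nd: "\<not> Q dvd P"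
    proof
      assume "Q dvd P"
      then obtain r where r: "P = Q * r" by (auto elim: dvdE)
      have "P \<noteq> 0" using P by auto
      then have rnz: "r \<noteq> 0" using r by auto
      from irreducibleD[OF P r] have "is_unit Q \<or> is_unit r" .
      moreover have "\<not> is_unit Q" using pQ by (simp add: prime_def prime_elem_def)
      ultimately have "is_unit r" by simp
      then have "degree r = 0" by (simp add: is_unit_iff_degree rnz)
      then have "degree P = degree Q" using r rnz pQ by (simp add: degree_mult_eq prime_def prime_elem_def)
      with dQ show False by simp
    qed
    then have l: "poly_legendre P Q ^ 2 = 1" by (auto simp: poly_legendre_def)
    have "multiplicity Q (h^2) = multiplicity Q h + multiplicity Q h"
      using pQ hnz by (simp add: power2_eq_square prime_elem_multiplicity_mult_distrib)
    then have "multiplicity Q (h^2) = 2 * multiplicity Q h" by simp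
    then show ?thesis using l by (simp add: power_mult)
  qed
  then show ?thesis unfolding chi_def poly_jacobi_def by simp
qed

lemma T_formula:
  assumes g: "g \<ge> 1"
  shows "(\<Sum>f\<in>{f::'a::{finite,field_gcd} poly. monic f \<and> degree f \<le> 2*g-1 \<and> is_monic_square f}.
            real (divisor_count f) / sqrt (pnorm f))
       = real g * (real g + 1) * (real g + 2) / 6 - real g * (real g - 1) * (real g - 2) / 6 / real CARD('a)"
proof -
  let ?Q = "real CARD('a)"
  have Qpos: "?Q > 0" by simp
  have inj: "inj_on (\<lambda>h. h^2) (\<Union>m\<in>{..<g}. (Monics m :: 'a poly set))"
    by (rule inj_onI) (auto simp: Monics_def intro: monic_sq_unique)
  have "(\<Sum>f\<in>{f::'a poly. monic f \<and> degree f \<le> 2*g-1 \<and> is_monic_square f}. real (divisor_count f) / sqrt (pnorm f))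
     = (\<Sum>h\<in>(\<Union>m\<in>{..<g}. (Monics m :: 'a poly set)). real (divisor_count (h^2)) / sqrt (pnorm (h^2)))"
    unfolding Sq_eq[OF g] by (subst sum.reindex[OF inj]) simp
  also have "\<dots> = (\<Sum>m<g. \<Sum>h\<in>(Monics m :: 'a poly set). real (divisor_count (h^2)) / sqrt (pnorm (h^2)))"
    by (rule sum.UNION_disjoint) (simp, simp add: finite_Monics, auto simp: Monics_def)
  also have "\<dots> = (\<Sum>m<g. real (card (Trip m :: ('a poly \<times> 'a poly \<times> 'a poly) set)) / ?Q^m)"
  proof (intro sum.cong refl)
    fix m assume "m \<in> {..<g}"
    have "(\<Sum>h\<in>(Monics m :: 'a poly set). real (divisor_count (h^2)) / sqrt (pnorm (h^2)))
        = (\<Sum>h\<in>(Monics m :: 'a poly set). real (divisor_count (h^2)) / ?Q^m)"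
    proof (intro sum.cong refl)
      fix h :: "'a poly" assume "h \<in> Monics m"
      then have "degree (h^2) = 2 * m" by (auto simp: Monics_def power2_eq_square monic_degree_mult)
      then have "pnorm (h^2) = (?Q^m)^2" by (simp add: pnorm_def power_mult[symmetric] mult.commute)
      then have "sqrt (pnorm (h^2)) = ?Q^m" by simp
      then show "real (divisor_count (h^2)) / sqrt (pnorm (h^2)) = real (divisor_count (h^2)) / ?Q^m" by simp
    qed
    also have "\<dots> = real (\<Sum>h\<in>(Monics m :: 'a poly set). divisor_count (h^2)) / ?Q^m"
      by (simp add: sum_divide_distrib)
    also have "\<dots> = real (card (Trip m :: ('a poly \<times> 'a poly \<times> 'a poly) set)) / ?Q^m"
      by (simp only: sum_divisor_count)
    finally show "(\<Sum>h\<in>(Monics m :: 'a poly set). real (divisor_count (h^2)) / sqrt (pnorm (h^2)))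
        = real (card (Trip m :: ('a poly \<times> 'a poly \<times> 'a poly) set)) / ?Q^m" .
  qed
  also have "\<dots> = (\<Sum>m<g. (real m + 1) * (real m + 2) / 2 - real m * (real m - 1) / 2 / ?Q)"
    by (intro sum.cong refl D_formula Qpos)
  also have "\<dots> = real g * (real g + 1) * (real g + 2) / 6 - real g * (real g - 1) * (real g - 2) / 6 / ?Q"
    by (rule sum_quad) simp
  finally show ?thesis .
qed

lemma double_sum_eq:
  assumes g: "g \<ge> 1"
  shows "(\<Sum>P\<in>{P::'a::{finite,field_gcd} poly. monic P \<and> irreducible P \<and> degree P = 2*g+1}.
        \<Sum>f\<in>{f::'a poly. monic f \<and> degree f \<le> 2*g-1 \<and> is_monic_square f}.
          real_of_int (chi P f) * real (divisor_count f) / sqrt (pnorm f))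
    = real (card (Irr (2*g+1) :: 'a poly set)) *
      (real g * (real g + 1) * (real g + 2) / 6 - real g * (real g - 1) * (real g - 2) / 6 / real CARD('a))"
proof -
  have "(\<Sum>P\<in>{P::'a poly. monic P \<and> irreducible P \<and> degree P = 2*g+1}.
        \<Sum>f\<in>{f::'a poly. monic f \<and> degree f \<le> 2*g-1 \<and> is_monic_square f}.
          real_of_int (chi P f) * real (divisor_count f) / sqrt (pnorm f))
      = (\<Sum>P\<in>(Irr (2*g+1) :: 'a poly set).
        \<Sum>f\<in>{f::'a poly. monic f \<and> degree f \<le> 2*g-1 \<and> is_monic_square f}.
          real (divisor_count f) / sqrt (pnorm f))"
    unfolding Irr_def[symmetric]
  proof (intro sum.cong refl)
    fix P f assume P: "P \<in> (Irr (2*g+1) :: 'a poly set)"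
      and f: "f \<in> {f::'a poly. monic f \<and> degree f \<le> 2*g-1 \<and> is_monic_square f}"
    obtain h where h: "monic h" "f = h^2" "degree f \<le> 2*g-1" using f by (auto simp: is_monic_square_def)
    have "degree f = 2 * degree h" using h by (simp add: power2_eq_square monic_degree_mult)
    then have "2 * degree h < degree P" using h P by (auto simp: Irr_def)
    then have "chi P f = 1" using h P by (auto simp: Irr_def intro!: chi_square)
    then show "real_of_int (chi P f) * real (divisor_count f) / sqrt (pnorm f) = real (divisor_count f) / sqrt (pnorm f)"
      by simp
  qed
  also have "\<dots> = real (card (Irr (2*g+1) :: 'a poly set)) *
      (real g * (real g + 1) * (real g + 2) / 6 - real g * (real g - 1) * (real g - 2) / 6 / real CARD('a))"
    by (simp only: T_formula[OF g] sum_constant)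
  finally show ?thesis .
qed



theorem proposition4p6:
  assumes "CARD('a::{finite,field_gcd}) mod 4 = 1"
  shows "(\<lambda>g::nat.
      (\<Sum>P\<in>{P::'a poly. monic P \<and> irreducible P \<and> degree P = 2*g+1}.
        \<Sum>f\<in>{f::'a poly. monic f \<and> degree f \<le> 2*g-1 \<and> is_monic_square f}.
          real_of_int (chi P f) * real (divisor_count f) / sqrt (pnorm f))
      - (let q = real CARD('a); absP = q ^ (2*g+1); logP = real (2*g+1);
             zeta2 = 1 / (1 - 1/q);
             h = real_of_int \<lfloor>(2 * real g - 1) / 2\<rfloor>
         in 1/12 * (1/zeta2) * (absP / logP) * h * (1 + h) * (1 + 2*h)))
    \<in> O(\<lambda>g::nat. real CARD('a) ^ (2*g+1) / real (2*g+1) * (real g)\<^sup>2)"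
proof -
  define Q where "Q = real CARD('a)"
  have q2: "CARD('a) \<ge> 2"
  proof -
    have "card {0::'a, 1} \<le> CARD('a)" by (rule card_mono) auto
    then show ?thesis by simp
  qed
  then have Q2: "Q \<ge> 2" unfolding Q_def by simp
  define N where "N = (\<lambda>g::nat. real (card (Irr (2*g+1) :: 'a poly set)))"
  define A where "A = (\<lambda>g::nat. Q^(2*g+1) / real (2*g+1))"
  define T where "T = (\<lambda>g::nat. real g * (real g + 1) * (real g + 2) / 6 - real g * (real g - 1) * (real g - 2) / 6 / Q)"
  define M0 where "M0 = (\<lambda>g::nat. (1 - 1/Q) * (real g - 1) * real g * (2 * real g - 1) / 12)"
  have fl: "\<lfloor>(2 * real g - 1) / 2\<rfloor> = int g - 1" for g :: nat
    by (rule floor_unique) (simp_all add: field_simps)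
  have E_eq: "(\<Sum>P\<in>{P::'a poly. monic P \<and> irreducible P \<and> degree P = 2*g+1}.
        \<Sum>f\<in>{f::'a poly. monic f \<and> degree f \<le> 2*g-1 \<and> is_monic_square f}.
          real_of_int (chi P f) * real (divisor_count f) / sqrt (pnorm f))
      - (let q = real CARD('a); absP = q ^ (2*g+1); logP = real (2*g+1);
             zeta2 = 1 / (1 - 1/q);
             h = real_of_int \<lfloor>(2 * real g - 1) / 2\<rfloor>
         in 1/12 * (1/zeta2) * (absP / logP) * h * (1 + h) * (1 + 2*h))
      = N g * T g - A g * M0 g" if g: "g \<ge> 1" for g
  proof -
    have "(let q = real CARD('a); absP = q ^ (2*g+1); logP = real (2*g+1);
             zeta2 = 1 / (1 - 1/q);
             h = real_of_int \<lfloor>(2 * real g - 1) / 2\<rfloor>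
         in 1/12 * (1/zeta2) * (absP / logP) * h * (1 + h) * (1 + 2*h)) = A g * M0 g"
      unfolding Let_def fl A_def M0_def Q_def by (simp add: field_simps)
    then show ?thesis using double_sum_eq[OF g, where 'a='a] by (simp add: N_def T_def Q_def)
  qed
  have Nb: "N g \<le> A g \<and> A g - N g \<le> real (g+1) * (2 * real g + 2) * Q^g" for g
  proof -
    let ?n = "2*g+1"
    have n1: "?n \<ge> 1" by simp
    have L: "Lsum TYPE('a) ?n = CARD('a)^?n" by (rule Lsum_eq[OF n1])
    have d: "?n div 2 = g" by simp
    have a: "?n * card (Irr ?n :: 'a poly set) \<le> CARD('a)^?n" using Lsum_split(1)[OF n1, where 'a='a] L by simp
    have b: "CARD('a)^?n \<le> ?n * card (Irr ?n :: 'a poly set) + ?n * ((g + 1) * CARD('a)^g * (?n+1))"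
      using Lsum_split(2)[OF n1, where 'a='a] L d by simp
    have a': "real ?n * N g \<le> Q^?n" using a unfolding N_def Q_def
      by (metis of_nat_le_iff of_nat_mult of_nat_power)
    have b0: "real (CARD('a)^?n) \<le> real (?n * card (Irr ?n :: 'a poly set) + ?n * ((g + 1) * CARD('a)^g * (?n+1)))"
      using b by (simp only: of_nat_le_iff)
    have b': "Q^?n \<le> real ?n * N g + real ?n * (real (g+1) * Q^g * real (?n+1))"
      using b0 unfolding N_def Q_def by (simp only: of_nat_add of_nat_mult of_nat_power)
    have npos: "real ?n > 0" by simp
    show ?thesis
    proof
      show "N g \<le> A g" unfolding A_def using a' npos by (simp add: field_simps)
      show "A g - N g \<le> real (g+1) * (2 * real g + 2) * Q^g" unfolding A_def using b' npos
        by (simp add: field_simps)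
    qed
  qed
  have Tb: "0 \<le> T g \<and> T g \<le> real g ^ 3" if g: "g \<ge> 1" for g
  proof -
    have x: "real g \<ge> 1" using g by simp
    define a where "a = real g * (real g - 1) * (real g - 2) / 6"
    define b where "b = real g * (real g + 1) * (real g + 2) / 6"
    have c: "0 \<le> (real g - 1) * (real g - 2)"
    proof (cases "g \<le> 1")
      case True then have "real g = 1" using g by simp
      then show ?thesis by simp
    next
      case False then have "real g \<ge> 2" by simp
      then show ?thesis by simp
    qed
    have a0: "0 \<le> a" unfolding a_def using c x by (simp add: mult.assoc)
    have aQ: "a / Q \<le> a"
    proof -
      have "a * 1 \<le> a * Q" using a0 Q2 by (intro mult_left_mono) auto
      then show ?thesis using Q2 by (simp add: divide_le_eq)
    qed
    have aQ0: "0 \<le> a / Q" using a0 Q2 by simp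
    have "b - a = real g ^ 2" unfolding a_def b_def by (simp add: field_simps power2_eq_square; simp add: algebra_simps)
    then have ab: "a \<le> b" by (metis diff_ge_0_iff_ge zero_le_power2)
    have "real g ^ 3 - b = real g * (real g - 1) * (5 * real g + 2) / 6" unfolding b_def
      by (simp add: field_simps power3_eq_cube; simp add: algebra_simps)
    moreover have "0 \<le> real g * (real g - 1) * (5 * real g + 2) / 6" using x by simp
    ultimately have b3: "b \<le> real g ^ 3" by simp
    have "T g = b - a / Q" unfolding T_def a_def b_def by simp
    then show ?thesis using aQ aQ0 ab b3 by simp
  qed
  have TM: "\<bar>T g - M0 g\<bar> \<le> 2 * real g ^ 2" if g: "g \<ge> 1" for g
  proof -
    have eq: "T g - M0 g = (9 * real g ^ 2 + 3 * real g) / 12 + (real g ^ 2 - real g) / (4 * Q)"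
      unfolding T_def M0_def using Q2 by (simp add: field_simps power2_eq_square) 
    have x: "real g \<ge> 1" using g by simp
    have r1: "0 \<le> (real g ^ 2 - real g) / (4 * Q)" using x Q2 by (simp add: power2_eq_square)
    have r2: "(real g ^ 2 - real g) / (4 * Q) \<le> real g ^ 2 / 4"
    proof -
      have "(real g ^ 2 - real g) / (4 * Q) \<le> (real g ^ 2) / (4 * Q)" using x Q2 by (intro divide_right_mono) auto
      also have "\<dots> \<le> real g ^ 2 / 4" using Q2 by (intro divide_left_mono) auto
      finally show ?thesis .
    qed
    have r3: "3 * real g \<le> 3 * real g ^ 2" using x by (simp add: power2_eq_square)
    have r4: "0 \<le> real g" by simp
    have r5: "0 \<le> real g ^ 2" by simp
    have gen: "0 \<le> (9*y+3*x)/12 + r \<and> (9*y+3*x)/12 + r \<le> 2*y"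
      if "0 \<le> r" "r \<le> y/4" "3*x \<le> 3*y" "0 \<le> x" "0 \<le> y" for x y r :: real
    proof -
      have e: "(9*y+3*x)/12 = 3/4*y + x/4" by simp
      show ?thesis unfolding e using that by linarith
    qed
    have "0 \<le> T g - M0 g \<and> T g - M0 g \<le> 2 * real g ^ 2" unfolding eq
      by (rule gen[OF r1 r2 r3 r4 r5])
    then show ?thesis by auto
  qed
  have ev: "eventually (\<lambda>g::nat. real (g+1) * (2*real g+2) * (2*real g+1) * real g \<le> 2^(g+1)) at_top"
    by real_asymp
  have key: "\<bar>N g * T g - A g * M0 g\<bar> \<le> 3 * \<bar>A g * (real g)^2\<bar>"
    if g: "g \<ge> 1" and pg: "real (g+1) * (2*real g+2) * (2*real g+1) * real g \<le> 2^(g+1)" for g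
  proof -
    define P where "P = real (g+1) * (2*real g+2) * (2*real g+1) * real g"
    have Apos: "0 \<le> A g" unfolding A_def using Q2 by simp
    have Qg: "0 \<le> Q^g" using Q2 by simp
    have N1: "N g \<le> A g" and N2: "A g - N g \<le> real (g+1) * (2 * real g + 2) * Q^g" using Nb[of g] by auto
    have T1: "0 \<le> T g" and T2: "T g \<le> real g ^ 3" using Tb[OF g] by auto
    have TM': "\<bar>T g - M0 g\<bar> \<le> 2 * real g ^ 2" by (rule TM[OF g])
    have split: "N g * T g - A g * M0 g = (N g - A g) * T g + A g * (T g - M0 g)" by (simp add: algebra_simps)
    have e1: "\<bar>(N g - A g) * T g\<bar> \<le> real (g+1) * (2 * real g + 2) * Q^g * real g ^ 3"
    proof -
      have "\<bar>(N g - A g) * T g\<bar> = (A g - N g) * T g" using N1 T1 by (simp add: abs_mult)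
      also have "\<dots> \<le> real (g+1) * (2 * real g + 2) * Q^g * real g ^ 3"
        using N1 N2 T1 T2 Qg by (intro mult_mono) auto
      finally show ?thesis .
    qed
    have e2: "\<bar>A g * (T g - M0 g)\<bar> \<le> A g * (2 * real g ^ 2)"
      using Apos TM' by (simp add: abs_mult mult_left_mono)
    have PQ: "P * Q^g \<le> Q^(2*g+1)"
    proof -
      have "P \<le> 2^(g+1)" using pg unfolding P_def .
      also have "(2::real)^(g+1) \<le> Q^(g+1)" using Q2 by (intro power_mono) auto
      finally have "P * Q^g \<le> Q^(g+1) * Q^g" using Qg by (intro mult_right_mono) auto
      also have "\<dots> = Q^(2*g+1)" by (simp add: power_add[symmetric] mult_2)
      finally show ?thesis .
    qed
    have e3: "real (g+1) * (2 * real g + 2) * Q^g * real g ^ 3 \<le> A g * real g ^ 2"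
    proof -
      have n0: "2 * real g + 1 > 0" by simp
      have "real (g+1) * (2 * real g + 2) * Q^g * real g ^ 3 = (P * Q^g) * (real g ^ 2 / (2 * real g + 1))"
        unfolding P_def using n0 by (simp add: field_simps power2_eq_square power3_eq_cube)
      also have "\<dots> \<le> Q^(2*g+1) * (real g ^ 2 / (2 * real g + 1))"
        using PQ n0 by (intro mult_right_mono) auto
      also have "\<dots> = A g * real g ^ 2" unfolding A_def by simp
      finally show ?thesis .
    qed
    have "\<bar>N g * T g - A g * M0 g\<bar> \<le> \<bar>(N g - A g) * T g\<bar> + \<bar>A g * (T g - M0 g)\<bar>"
      unfolding split by (rule abs_triangle_ineq)
    also have "\<dots> \<le> 3 * (A g * real g ^ 2)" using e1 e2 e3 by simp
    also have "\<dots> = 3 * \<bar>A g * (real g)^2\<bar>" using Apos by simp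
    finally show ?thesis .
  qed
  show ?thesis
  proof (rule bigoI[where c=3])
    show "eventually (\<lambda>g. norm (
      (\<Sum>P\<in>{P::'a poly. monic P \<and> irreducible P \<and> degree P = 2*g+1}.
        \<Sum>f\<in>{f::'a poly. monic f \<and> degree f \<le> 2*g-1 \<and> is_monic_square f}.
          real_of_int (chi P f) * real (divisor_count f) / sqrt (pnorm f))
      - (let q = real CARD('a); absP = q ^ (2*g+1); logP = real (2*g+1);
             zeta2 = 1 / (1 - 1/q);
             h = real_of_int \<lfloor>(2 * real g - 1) / 2\<rfloor>
         in 1/12 * (1/zeta2) * (absP / logP) * h * (1 + h) * (1 + 2*h)))
       \<le> 3 * norm (real CARD('a) ^ (2*g+1) / real (2*g+1) * (real g)\<^sup>2)) at_top"
      using ev eventually_ge_at_top[of "1::nat"]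
    proof eventually_elim
      case (elim g)
      have "real CARD('a) ^ (2*g+1) / real (2*g+1) * (real g)\<^sup>2 = A g * (real g)^2"
        by (simp add: A_def Q_def)
      then show ?case using key[OF elim(2,1)] E_eq[OF elim(2)] by simp
    qed
  qed
qed

end
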